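(* Let $A\in\mathcal{S}$ with elements $a_0<a_1<\dots<a_{n-1}$ and greatest element $a_{\max}=a_{n-1}$. Then $A$ is decomposable if and only if there is an $i<n-1$ such that $o(a_i,a_{\max})=0$.
   Context: $\mathrm{Homeo}_+(I)$ acts on $I=[0,1]$ on the right, composition left to right, $f^g=g^{-1}fg$. Support $\mathrm{supt}(f)=\{t:tf\ne t\}$; extended support = interior of its closure; orbitals = components of the support, endpoints = transition points; a bump has exactly one orbital, positive if $tf>t$ there, else negative; the bump of $g$ on an orbital $J$ agrees with $g$ on $J$ and is the identity elsewhere. A marking assigns to each bump $a$ with support $(u,v)$ a point $s_a\in(u,v)$; feet of $a$: $(u,s_a)$ and $[t_a,v)$ with $t_a=s_aa$ ($a$ positive) or $s_aa^{-1}$ ($a$ negative). A marked function has finitely many bumps, each marked. A finite set of marked functions is fast if no bump occurs in two of its elements and distinct bumps have disjoint feet. A standard function is a marked function whose extended support is an interval, with all positive bumps right of all negative bumps, and #positive $-$ #negative bumps $\in\{0,1\}$. For standard $f,g$: $f\ll g$ iff extended supports disjoint with $f$'s to the left; $f\sqsubset g$ iff closure of extended support of $f$ lies in extended support of $g$; $f<g$ iff $f\ll g$ or $f\sqsubset g$. $f^\circ$: if $f$ has $>2$ orbitals, $f$ restricted to the union of its non-extreme orbitals (identity elsewhere, markers inherited); if $f$ has 1 or 2 orbitals and the left foot of its positive bump is $(r,s)$, a positive bump with support $(r,s)$. $(f,g)$ is a standard pair if $\{f,g\}$ is fast and either $f\ll g$ or ($f\sqsubset g$ and $(g^\circ,f)$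 is a standard pair). $\mathcal{S}$ = finite sets of standard functions, pairwise $<$-comparable, each pair $f<g$ a standard pair. For $f<g$ the oscillation $o(f,g)$ is the number of orbitals of $g$ containing a transition point of $f$. For $A,B,C\in\mathcal S$, $A=B+C$ means $A=B\cup C$ and $b\ll c$ for all $b\in B$, $c\in C$; $A$ is decomposable if $A=B+C$ for some nonempty $B,C$, and indecomposable otherwise. *)

theory Defs
  imports "HOL-Analysis.Analysis"
begin

text \<open>An element of Homeo_+(I) is represented by a function real to real which is an
  increasing homeomorphism of [0,1] onto itself and the identity outside [0,1]
  (canonical extension). The right action t f is written f t.\<close>

definition homeo_plus :: "(real \<Rightarrow> real) \<Rightarrow> bool" where
  "homeo_plus f \<longleftrightarrow> (\<exists>g. homeomorphism {0..1} {0..1} f g) \<and> mono_on {0..1} f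
      \<and> (\<forall>t. t \<notin> {0..1} \<longrightarrow> f t = t)"

definition supt :: "(real \<Rightarrow> real) \<Rightarrow> real set" where
  "supt f = {t. f t \<noteq> t}"

definition ext_supp :: "(real \<Rightarrow> real) \<Rightarrow> real set" where
  "ext_supp f = interior (closure (supt f))"

definition orbitals :: "(real \<Rightarrow> real) \<Rightarrow> real set set" where
  "orbitals f = components (supt f)"

definition transition_points :: "(real \<Rightarrow> real) \<Rightarrow> real set" where
  "transition_points f = (\<Union>J\<in>orbitals f. {Inf J, Sup J})"

definition is_bump :: "(real \<Rightarrow> real) \<Rightarrow> bool" where
  "is_bump f \<longleftrightarrow> homeo_plus f \<and> card (orbitals f) = 1"

definition positive_bump :: "(real \<Rightarrow> real) \<Rightarrow> bool" where
  "positive_bump f \<longleftrightarrow> is_bump f \<and> (\<forall>t\<in>supt f. f t > t)"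

definition negative_bump :: "(real \<Rightarrow> real) \<Rightarrow> bool" where
  "negative_bump f \<longleftrightarrow> is_bump f \<and> (\<forall>t\<in>supt f. f t < t)"

definition bump_of :: "(real \<Rightarrow> real) \<Rightarrow> real set \<Rightarrow> (real \<Rightarrow> real)" where
  "bump_of f J = (\<lambda>t. if t \<in> J then f t else t)"

text \<open>A marked function is a pair (f, M) where M is the set of markers:
  exactly one marker in each orbital, and no other markers.\<close>
type_synonym mfun = "(real \<Rightarrow> real) \<times> real set"

definition marked :: "mfun \<Rightarrow> bool" where
  "marked F \<longleftrightarrow> homeo_plus (fst F) \<and> finite (orbitals (fst F))
     \<and> snd F \<subseteq> supt (fst F)
     \<and> (\<forall>J\<in>orbitals (fst F). \<exists>!s. s \<in> snd F \<inter> J)"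

definition marked_bumps :: "mfun \<Rightarrow> ((real \<Rightarrow> real) \<times> real) set" where
  "marked_bumps F = {(bump_of (fst F) J, s) | J s. J \<in> orbitals (fst F) \<and> s \<in> snd F \<inter> J}"

text \<open>Feet of a marked bump (b, s) with support (u, v): (u, s) and [t, v), where
  t = s b if b is positive and t = s b^{-1} (i.e. b t = s) if b is negative.\<close>
definition left_foot :: "(real \<Rightarrow> real) \<times> real \<Rightarrow> real set" where
  "left_foot a = {Inf (supt (fst a))<..<snd a}"

definition foot_point :: "(real \<Rightarrow> real) \<times> real \<Rightarrow> real" where
  "foot_point a = (if fst a (snd a) > snd a then fst a (snd a)
                   else (THE t. fst a t = snd a))"

definition right_foot :: "(real \<Rightarrow> real) \<times> real \<Rightarrow> real set" where
  "right_foot a = {foot_point a..<Sup (supt (fst a))}"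

definition feet :: "(real \<Rightarrow> real) \<times> real \<Rightarrow> real set" where
  "feet a = left_foot a \<union> right_foot a"

definition fast :: "mfun set \<Rightarrow> bool" where
  "fast X \<longleftrightarrow> finite X \<and> (\<forall>F\<in>X. marked F)
     \<and> (\<forall>F\<in>X. \<forall>G\<in>X. F \<noteq> G \<longrightarrow> marked_bumps F \<inter> marked_bumps G = {})
     \<and> (\<forall>a\<in>(\<Union>F\<in>X. marked_bumps F). \<forall>b\<in>(\<Union>F\<in>X. marked_bumps F).
           a \<noteq> b \<longrightarrow> feet a \<inter> feet b = {})"

definition pos_orbitals :: "(real \<Rightarrow> real) \<Rightarrow> real set set" where
  "pos_orbitals f = {J\<in>orbitals f. \<forall>t\<in>J. f t > t}"

definition neg_orbitals :: "(real \<Rightarrow> real) \<Rightarrow> real set set" where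
  "neg_orbitals f = {J\<in>orbitals f. \<forall>t\<in>J. f t < t}"

definition standard :: "mfun \<Rightarrow> bool" where
  "standard F \<longleftrightarrow> marked F
     \<and> (\<exists>a b. a < b \<and> ext_supp (fst F) = {a<..<b})
     \<and> (\<forall>P\<in>pos_orbitals (fst F). \<forall>N\<in>neg_orbitals (fst F). \<forall>x\<in>P. \<forall>y\<in>N. y < x)
     \<and> int (card (pos_orbitals (fst F))) - int (card (neg_orbitals (fst F))) \<in> {0, 1}"

definition ll :: "mfun \<Rightarrow> mfun \<Rightarrow> bool" (infix "\<lless>" 50) where
  "F \<lless> G \<longleftrightarrow> ext_supp (fst F) \<inter> ext_supp (fst G) = {}
     \<and> (\<forall>x\<in>ext_supp (fst F). \<forall>y\<in>ext_supp (fst G). x < y)"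

definition sqsub :: "mfun \<Rightarrow> mfun \<Rightarrow> bool" (infix "\<sqsubset>" 50) where
  "F \<sqsubset> G \<longleftrightarrow> closure (ext_supp (fst F)) \<subseteq> ext_supp (fst G)"

definition slt :: "mfun \<Rightarrow> mfun \<Rightarrow> bool" where
  "slt F G \<longleftrightarrow> F \<lless> G \<or> F \<sqsubset> G"

definition leftmost_orbital :: "(real \<Rightarrow> real) \<Rightarrow> real set" where
  "leftmost_orbital f = (THE J. J \<in> orbitals f \<and>
      (\<forall>K\<in>orbitals f. K \<noteq> J \<longrightarrow> (\<forall>x\<in>J. \<forall>y\<in>K. x < y)))"

definition rightmost_orbital :: "(real \<Rightarrow> real) \<Rightarrow> real set" where
  "rightmost_orbital f = (THE J. J \<in> orbitals f \<and>
      (\<forall>K\<in>orbitals f. K \<noteq> J \<longrightarrow> (\<forall>x\<in>J. \<forall>y\<in>K. y < x)))"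

definition marker_of :: "mfun \<Rightarrow> real set \<Rightarrow> real" where
  "marker_of F J = (THE s. s \<in> snd F \<inter> J)"

definition circ :: "mfun \<Rightarrow> mfun" where
  "circ F =
    (if card (orbitals (fst F)) > 2 then
       (let U = \<Union>(orbitals (fst F) - {leftmost_orbital (fst F), rightmost_orbital (fst F)})
        in ((\<lambda>t. if t \<in> U then fst F t else t), snd F \<inter> U))
     else
       (let P = (THE J. J \<in> pos_orbitals (fst F));
            r = Inf P; s = marker_of F P
        in (SOME B. marked B \<and> positive_bump (fst B) \<and> supt (fst B) = {r<..<s})))"

inductive std_pair :: "mfun \<Rightarrow> mfun \<Rightarrow> bool" where
  ll_pair: "fast {F, G} \<Longrightarrow> F \<lless> G \<Longrightarrow> std_pair F G"
| sq_pair: "fast {F, G} \<Longrightarrow> F \<sqsubset> G \<Longrightarrow> std_pair (circ G) F \<Longrightarrow> std_pair F G"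

definition class_S :: "mfun set set" where
  "class_S = {A. finite A \<and> (\<forall>F\<in>A. standard F)
      \<and> (\<forall>F\<in>A. \<forall>G\<in>A. F \<noteq> G \<longrightarrow> slt F G \<or> slt G F)
      \<and> (\<forall>F\<in>A. \<forall>G\<in>A. slt F G \<longrightarrow> std_pair F G)}"

definition oscillation :: "mfun \<Rightarrow> mfun \<Rightarrow> nat" where
  "oscillation F G = card {J\<in>orbitals (fst G). transition_points (fst F) \<inter> J \<noteq> {}}"

definition is_sum :: "mfun set \<Rightarrow> mfun set \<Rightarrow> mfun set \<Rightarrow> bool" where
  "is_sum A B C \<longleftrightarrow> A \<in> class_S \<and> B \<in> class_S \<and> C \<in> class_S \<and> A = B \<union> C
      \<and> (\<forall>b\<in>B. \<forall>c\<in>C. b \<lless> c)"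

definition decomposable :: "mfun set \<Rightarrow> bool" where
  "decomposable A \<longleftrightarrow> (\<exists>B C. B \<noteq> {} \<and> C \<noteq> {} \<and> is_sum A B C)"

end

theory Submission
  imports Defs
begin

lemma homeo_fix01:
  assumes "homeo_plus f" shows "f 0 = 0" "f 1 = 1"
proof -
  obtain g where h: "homeomorphism {0..1} {0..1} f g" and m: "mono_on {0..1} f"
    using assms unfolding homeo_plus_def by blast
  have im: "f ` {0..1} = {0..1}" using h unfolding homeomorphism_def by blast
  obtain x where x: "x \<in> {0..1::real}" "f x = 0" using im
    by (metis (no_types, lifting) atLeastAtMost_iff image_iff order_refl zero_le_one)
  obtain y where y: "y \<in> {0..1::real}" "f y = 1" using im
    by (metis (no_types, lifting) atLeastAtMost_iff image_iff order_refl zero_le_one)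
  have "f 0 \<le> f x" using mono_onD[OF m, of 0 x] x by auto
  moreover have "f 0 \<in> {0..1}" using im by auto
  ultimately show "f 0 = 0" using x by auto
  have "f y \<le> f 1" using mono_onD[OF m, of y 1] y by auto
  moreover have "f 1 \<in> {0..1}" using im by auto
  ultimately show "f 1 = 1" using y by auto
qed

lemma supt_open:
  assumes "homeo_plus f" shows "open (supt f)"
proof -
  obtain g where h: "homeomorphism {0..1} {0..1} f g"
    using assms unfolding homeo_plus_def by blast
  have c: "continuous_on {0..1} f" using h unfolding homeomorphism_def by blast
  have out: "\<And>t. t \<notin> {0..1} \<Longrightarrow> f t = t" using assms unfolding homeo_plus_def by blast
  have eq: "supt f = {0<..<1} \<inter> (\<lambda>t. f t - t) -` (-{0})"
    using out homeo_fix01[OF assms] unfolding supt_def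
    by (auto simp: less_le) (metis atLeastAtMost_iff linorder_not_le)+
  have "continuous_on {0<..<1} (\<lambda>t. f t - t)"
    by (intro continuous_intros continuous_on_subset[OF c]) auto
  then show ?thesis unfolding eq
    by (intro continuous_open_preimage) auto
qed

lemma conn_side:
  fixes J :: "real set"
  assumes "connected J" "c \<notin> J"
  shows "J \<subseteq> {c<..} \<or> J \<subseteq> {..<c}"
proof (rule ccontr)
  assume "\<not> ?thesis"
  then obtain y z where "y \<in> J" "z \<in> J" "\<not> y > c" "\<not> z < c" by auto
  then have "y < c" "c < z" using assms(2) by (auto simp: not_less le_less)
  then have "c \<in> {y..z}" by auto
  with connected_contains_Icc[OF assms(1) \<open>y \<in> J\<close> \<open>z \<in> J\<close>] assms(2) show False by blast
qed

lemma left_orbital: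
  assumes fin: "finite (orbitals f)" and cn: "c \<notin> supt f" and ce: "c < e"
    and sub: "{c<..<e} \<subseteq> closure (supt f)"
  shows "\<exists>J\<in>orbitals f. Inf J = c \<and> J \<subseteq> {c<..}"
proof (rule ccontr)
  assume na: "\<not> ?thesis"
  define P where "P = {J\<in>orbitals f. J \<subseteq> {c<..}}"
  have finP: "finite P" using fin unfolding P_def by auto
  have Pgt: "Inf J > c" if "J \<in> P" for J
  proof -
    have "J \<noteq> {}" using that unfolding P_def orbitals_def using in_components_nonempty by blast
    then have "Inf J \<ge> c" using that unfolding P_def by (intro cInf_greatest) auto
    moreover have "Inf J \<noteq> c" using na that unfolding P_def by auto
    ultimately show ?thesis by auto
  qed
  define m where "m = Min (insert e (Inf ` P))"
  have mc: "m > c" unfolding m_def using finP Pgt ce by (subst Min_gr_iff) auto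
  have me: "m \<le> e" unfolding m_def using finP by auto
  have mP: "m \<le> Inf J" if "J \<in> P" for J unfolding m_def using finP that by auto
  define x where "x = (c + m) / 2"
  have "x \<in> {c<..<e}" unfolding x_def using mc me by auto
  then have "x \<in> closure (\<Union>(orbitals f))" using sub unfolding orbitals_def by (simp add: subset_iff)
  then have "x \<in> \<Union>(closure ` orbitals f)" 
  proof -
    have "closure (\<Union>(orbitals f)) \<subseteq> \<Union>(closure ` orbitals f)"
      using fin by (intro closure_minimal closed_Union) (auto intro: closure_subset[THEN subsetD])
    then show ?thesis using \<open>x \<in> closure (\<Union>(orbitals f))\<close> by blast
  qed
  then obtain J where J: "J \<in> orbitals f" "x \<in> closure J" by auto
  have "connected J" "c \<notin> J" "J \<noteq> {}"
    using J(1) cn unfolding orbitals_def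
    using in_components_connected in_components_subset in_components_nonempty by blast+
  from conn_side[OF this(1,2)] show False
  proof
    assume Jc: "J \<subseteq> {c<..}"
    then have "J \<in> P" using J unfolding P_def by auto
    have bb: "bdd_below J" using Jc by (intro bdd_belowI[of _ c]) auto
    have "J \<subseteq> {Inf J..}" using cInf_lower[OF _ bb] by auto
    then have "closure J \<subseteq> {Inf J..}" by (intro closure_minimal) auto
    then have "x \<ge> Inf J" using J by auto
    moreover have "x < m" unfolding x_def using mc by auto
    ultimately show False using mP[OF \<open>J \<in> P\<close>] by auto
  next
    assume "J \<subseteq> {..<c}"
    then have "closure J \<subseteq> {..c}" by (intro closure_minimal) auto
    then have "x \<le> c" using J by auto
    then show False unfolding x_def using mc by auto
  qed
qed

lemma std_ext:
  assumes "standard F" obtains c d where "c < d" "ext_supp (fst F) = {c<..<d}"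
  using assms unfolding standard_def by blast

lemma std_homeo: "standard F \<Longrightarrow> homeo_plus (fst F)"
  unfolding standard_def marked_def by blast

lemma std_fin: "standard F \<Longrightarrow> finite (orbitals (fst F))"
  unfolding standard_def marked_def by blast

lemma std_supt_sub:
  assumes "standard F" shows "supt (fst F) \<subseteq> ext_supp (fst F)"
  unfolding ext_supp_def
  by (intro interior_maximal closure_subset supt_open std_homeo assms)

lemma std_ext_sub:
  "ext_supp (fst F) \<subseteq> closure (supt (fst F))"
  unfolding ext_supp_def by (rule interior_subset)

lemma supt_bump_of:
  assumes "J \<subseteq> supt f" shows "supt (bump_of f J) = J"
  using assms unfolding supt_def bump_of_def by auto

lemma marked_bump_foot:
  assumes "marked F" "J \<in> orbitals (fst F)"
  shows "\<exists>s\<in>J. \<exists>p \<in> marked_bumps F. left_foot p = {Inf J<..<s}"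
proof -
  obtain s where s: "s \<in> snd F \<inter> J" using assms unfolding marked_def by blast
  have Js: "J \<subseteq> supt (fst F)" using assms(2) unfolding orbitals_def by (rule in_components_subset)
  have "(bump_of (fst F) J, s) \<in> marked_bumps F" unfolding marked_bumps_def using s assms(2) by blast
  moreover have "left_foot (bump_of (fst F) J, s) = {Inf J<..<s}"
    unfolding left_foot_def using supt_bump_of[OF Js] by simp
  ultimately show ?thesis using s by blast
qed

lemma osc0_empty:
  assumes "standard G" "oscillation F G = 0"
  shows "{J\<in>orbitals (fst G). transition_points (fst F) \<inter> J \<noteq> {}} = {}"
proof -
  have "finite {J\<in>orbitals (fst G). transition_points (fst F) \<inter> J \<noteq> {}}"
    using std_fin[OF assms(1)] by auto
  then show ?thesis using assms(2) unfolding oscillation_def by simp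
qed

lemma sq_contra:
  assumes sF: "standard F" and sG: "standard G" and fa: "fast {F, G}" and ne: "F \<noteq> G"
    and sq: "F \<sqsubset> G" and os: "oscillation F G = 0"
  shows False
proof -
  obtain c d where cd: "c < d" "ext_supp (fst F) = {c<..<d}" using std_ext[OF sF] by blast
  obtain a b where ab: "a < b" "ext_supp (fst G) = {a<..<b}" using std_ext[OF sG] by blast
  have "{c..d} \<subseteq> {a<..<b}" using sq cd ab unfolding sqsub_def by simp
  moreover have "c \<in> {c..d}" using cd by auto
  ultimately have "c \<in> {a<..<b}" by blast
  then have cab: "a < c" "c < b" by auto
  have cF: "c \<notin> supt (fst F)" using std_supt_sub[OF sF] cd by auto
  have "{c<..<d} \<subseteq> closure (supt (fst F))" using std_ext_sub[of F] cd by simp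
  from left_orbital[OF std_fin[OF sF] cF cd(1) this]
  obtain K where K: "K \<in> orbitals (fst F)" "Inf K = c" "K \<subseteq> {c<..}" by blast
  have tp: "c \<in> transition_points (fst F)" unfolding transition_points_def using K by force
  have cG: "c \<notin> supt (fst G)"
  proof
    assume "c \<in> supt (fst G)"
    then obtain J where "J \<in> orbitals (fst G)" "c \<in> J" unfolding orbitals_def
      using Union_components[of "supt (fst G)"] by blast
    then show False using osc0_empty[OF sG os] tp by blast
  qed
  have "{c<..<b} \<subseteq> closure (supt (fst G))" using std_ext_sub[of G] ab cab by auto
  from left_orbital[OF std_fin[OF sG] cG cab(2) this]
  obtain J where J: "J \<in> orbitals (fst G)" "Inf J = c" "J \<subseteq> {c<..}" by blast
  have mF: "marked F" and mG: "marked G" using sF sG unfolding standard_def by auto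
  obtain s1 p where p: "s1 \<in> K" "p \<in> marked_bumps F" "left_foot p = {c<..<s1}"
    using marked_bump_foot[OF mF K(1)] K(2) by blast
  obtain s2 q where q: "s2 \<in> J" "q \<in> marked_bumps G" "left_foot q = {c<..<s2}"
    using marked_bump_foot[OF mG J(1)] J(2) by blast
  have "marked_bumps F \<inter> marked_bumps G = {}" using fa ne unfolding fast_def by blast
  then have "p \<noteq> q" using p q by blast
  then have "feet p \<inter> feet q = {}" using fa p q unfolding fast_def by blast
  moreover have "s1 > c" "s2 > c" using p q K J by auto
  then have "(c + min s1 s2) / 2 \<in> feet p \<inter> feet q"
    unfolding feet_def using p q by (auto simp: min_def)
  ultimately show False by blast
qed

lemma ll_le:
  assumes sF: "standard F" and sG: "standard G" and l: "F \<lless> G"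
    and cd: "ext_supp (fst F) = {c<..<d}" "c < d"
    and eg: "ext_supp (fst G) = {e<..<g}" "e < g"
  shows "d \<le> e"
proof (rule ccontr)
  assume "\<not> d \<le> e"
  then have de: "e < d" by simp
  define t where "t = max c e"
  define u where "u = min d g"
  show False
  proof (cases "t < u")
    case True
    then have "(t+u)/2 \<in> ext_supp (fst F) \<inter> ext_supp (fst G)"
      using cd eg unfolding t_def u_def by auto
    then show False using l unfolding ll_def by blast
  next
    case False
    then have "g \<le> c" using de cd eg unfolding t_def u_def by auto
    then have "(c+d)/2 \<in> ext_supp (fst F)" "(e+g)/2 \<in> ext_supp (fst G)" "(e+g)/2 < (c+d)/2"
      using cd eg by auto
    then show False using l unfolding ll_def by (meson less_asym)
  qed
qed

lemma ll_osc0: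
  assumes sF: "standard F" and sG: "standard G" and l: "F \<lless> G"
  shows "oscillation F G = 0"
proof -
  obtain c d where cd: "c < d" "ext_supp (fst F) = {c<..<d}" using std_ext[OF sF] by blast
  obtain e g where eg: "e < g" "ext_supp (fst G) = {e<..<g}" using std_ext[OF sG] by blast
  have de: "d \<le> e" using ll_le[OF sF sG l cd(2,1) eg(2,1)] .
  have tpd: "t \<le> d" if tpt: "t \<in> transition_points (fst F)" for t
  proof -
    obtain K where K: "K \<in> orbitals (fst F)" "t = Inf K \<or> t = Sup K"
      using tpt unfolding transition_points_def by blast
    have "K \<subseteq> {c<..<d}" using K(1) std_supt_sub[OF sF] cd unfolding orbitals_def
      using in_components_subset by blast
    moreover have "K \<noteq> {}" using K(1) unfolding orbitals_def using in_components_nonempty by blast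
    moreover obtain x where "x \<in> K" using \<open>K \<noteq> {}\<close> by blast
    ultimately have "Inf K \<le> d" "Sup K \<le> d"
    proof -
      have bb: "bdd_below K" using \<open>K \<subseteq> {c<..<d}\<close> by (intro bdd_belowI[of _ c]) auto
      have "Inf K \<le> x" using cInf_lower[OF \<open>x \<in> K\<close> bb] .
      then show "Inf K \<le> d" using \<open>x \<in> K\<close> \<open>K \<subseteq> {c<..<d}\<close> by auto
      show "Sup K \<le> d" using \<open>K \<noteq> {}\<close> \<open>K \<subseteq> {c<..<d}\<close>
        by (intro cSup_least) auto
    qed
    then show ?thesis using K by auto
  qed
  have E: "{J\<in>orbitals (fst G). transition_points (fst F) \<inter> J \<noteq> {}} = {}"
  proof (safe)
    fix J t assume J: "J \<in> orbitals (fst G)" "t \<in> transition_points (fst F)" "t \<in> J"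
    have "J \<subseteq> {e<..<g}" using J(1) std_supt_sub[OF sG] eg unfolding orbitals_def
      using in_components_subset by blast
    then show "t \<in> {}" using J tpd[OF J(2)] de by auto
  qed
  show ?thesis by (simp only: oscillation_def E card.empty)
qed

lemma ll_irrefl:
  assumes s: "standard F" shows "\<not> F \<lless> F"
proof
  assume l: "F \<lless> F"
  obtain c d where cd: "c < d" "ext_supp (fst F) = {c<..<d}" using std_ext[OF s] by blast
  have x: "(c+d)/2 \<in> ext_supp (fst F)" using cd by auto
  have "ext_supp (fst F) \<inter> ext_supp (fst F) = {}" using l unfolding ll_def by (rule conjunct1)
  then show False using x by simp
qed

lemma ll_slt_contra:
  assumes sF: "standard F" and sG: "standard G" and l: "F \<lless> G" and s: "slt G F"
  shows False
proof -
  obtain c d where cd: "c < d" "ext_supp (fst F) = {c<..<d}" using std_ext[OF sF] by blast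
  obtain e g where eg: "e < g" "ext_supp (fst G) = {e<..<g}" using std_ext[OF sG] by blast
  have x: "(c+d)/2 \<in> ext_supp (fst F)" using cd by auto
  have y: "(e+g)/2 \<in> ext_supp (fst G)" using eg by auto
  have "G \<lless> F \<or> G \<sqsubset> F" using s unfolding slt_def .
  then show False
  proof
    assume gf: "G \<lless> F"
    have "(c+d)/2 < (e+g)/2" using l x y unfolding ll_def by blast
    moreover have "(e+g)/2 < (c+d)/2" using gf x y unfolding ll_def by blast
    ultimately show False by simp
  next
    assume "G \<sqsubset> F"
    then have "ext_supp (fst G) \<subseteq> ext_supp (fst F)"
      unfolding sqsub_def using closure_subset by blast
    then show False using l y unfolding ll_def by blast
  qed
qed

lemma slt_irrefl:
  assumes sF: "standard F" shows "\<not> slt F F"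
proof
  assume "slt F F"
  then have "F \<lless> F \<or> F \<sqsubset> F" unfolding slt_def .
  moreover have "\<not> F \<lless> F" by (rule ll_irrefl[OF sF])
  ultimately have "F \<sqsubset> F" by simp
  then have sub: "closure (ext_supp (fst F)) \<subseteq> ext_supp (fst F)" unfolding sqsub_def .
  obtain c d where cd: "c < d" "ext_supp (fst F) = {c<..<d}" using std_ext[OF sF] by blast
  have "c \<in> closure (ext_supp (fst F))" using cd by simp
  then have "c \<in> {c<..<d}" using sub cd by blast
  then show False by simp
qed

lemma class_S_sub: "A \<in> class_S \<Longrightarrow> B \<subseteq> A \<Longrightarrow> B \<in> class_S"
proof -
  assume A: "A \<in> class_S" and BA: "B \<subseteq> A"
  have fA: "finite A" and sA: "\<forall>F\<in>A. standard F"
    and cA: "\<forall>F\<in>A. \<forall>G\<in>A. F \<noteq> G \<longrightarrow> slt F G \<or> slt G F"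
    and pA: "\<forall>F\<in>A. \<forall>G\<in>A. slt F G \<longrightarrow> std_pair F G"
    using A unfolding class_S_def by auto
  have "finite B" using fA BA by (rule finite_subset[rotated])
  moreover have "\<forall>F\<in>B. standard F" using sA BA by blast
  moreover have "\<forall>F\<in>B. \<forall>G\<in>B. F \<noteq> G \<longrightarrow> slt F G \<or> slt G F"
    using cA BA by blast
  moreover have "\<forall>F\<in>B. \<forall>G\<in>B. slt F G \<longrightarrow> std_pair F G"
    using pA BA by blast
  ultimately show ?thesis unfolding class_S_def by simp
qed

lemma std_pair_fast: "std_pair F G \<Longrightarrow> fast {F, G}"
  by (induction rule: std_pair.induct) simp_all

lemma idx:
  assumes "A = a ` {..<n}" "x \<in> A" obtains j where "j < n" "x = a j"
  using assms by blast

theorem lemma4p4: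
  fixes A :: "mfun set" and a :: "nat \<Rightarrow> mfun" and n :: nat
  assumes "A \<in> class_S"
    and "n \<ge> 1"
    and "A = a ` {..<n}"
    and "\<And>i j. i < j \<Longrightarrow> j < n \<Longrightarrow> slt (a i) (a j)"
  shows "decomposable A \<longleftrightarrow> (\<exists>i < n - 1. oscillation (a i) (a (n - 1)) = 0)"
proof -
  have stdA: "\<And>F. F \<in> A \<Longrightarrow> standard F" using assms(1) unfolding class_S_def by simp
  have pA: "\<forall>F\<in>A. \<forall>G\<in>A. slt F G \<longrightarrow> std_pair F G" using assms(1) unfolding class_S_def by simp
  have aA: "\<And>k. k < n \<Longrightarrow> a k \<in> A" using assms(3) by simp
  have sa: "\<And>k. k < n \<Longrightarrow> standard (a k)" using aA stdA by simp
  have n1: "n - 1 < n" using assms(2) by simp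
  have mA: "a (n-1) \<in> A" using aA[OF n1] .
  have smax: "standard (a (n-1))" using stdA[OF mA] .
  show ?thesis
  proof
    assume "decomposable A"
    then obtain B C where BC: "B \<noteq> {}" "C \<noteq> {}" "is_sum A B C"
      unfolding decomposable_def by blast
    have ABC: "A = B \<union> C" and llBC: "\<forall>b\<in>B. \<forall>c\<in>C. b \<lless> c"
      using BC(3) unfolding is_sum_def by simp_all
    have nB: "a (n-1) \<notin> B"
    proof
      assume mB: "a (n-1) \<in> B"
      obtain x where x: "x \<in> C" using BC(2) by blast
      have "x \<in> A" using x ABC by simp
      then obtain j where j: "j < n" "x = a j" using idx[OF assms(3)] by blast
      have l: "a (n-1) \<lless> a j" using llBC mB x j(2) by simp
      show False
      proof (cases "j = n - 1")
        case True then show False using l ll_irrefl[OF smax] by simp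
      next
        case False
        then have "j < n - 1" using j by simp
        then have "slt (a j) (a (n-1))" using assms(4)[of j "n-1"] n1 by simp
        then show False using ll_slt_contra[OF smax sa[OF j(1)] l] by simp
      qed
    qed
    obtain b where b: "b \<in> B" using BC(1) by blast
    have "b \<in> A" using b ABC by simp
    then obtain i where i: "i < n" "b = a i" using idx[OF assms(3)] by blast
    have mC: "a (n-1) \<in> C" using mA nB ABC by simp
    have l: "a i \<lless> a (n-1)" using llBC b mC i(2) by simp
    have "i \<noteq> n - 1" using nB b i(2) by auto
    then have "i < n - 1" using i by simp
    then show "\<exists>i < n - 1. oscillation (a i) (a (n - 1)) = 0"
      using ll_osc0[OF sa[OF i(1)] smax l] by blast
  next
    assume "\<exists>i < n - 1. oscillation (a i) (a (n - 1)) = 0"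
    then obtain i where i: "i < n - 1" "oscillation (a i) (a (n - 1)) = 0" by blast
    have in_: "i < n" using i by simp
    have sl: "slt (a i) (a (n-1))" using assms(4)[of i "n-1"] i n1 by simp
    have sp: "std_pair (a i) (a (n-1))" using pA aA[OF in_] mA sl by simp
    have ne: "a i \<noteq> a (n-1)" using sl slt_irrefl[OF smax] by auto
    have li: "a i \<lless> a (n-1)"
    proof (rule ccontr)
      assume "\<not> a i \<lless> a (n-1)"
      then have "a i \<sqsubset> a (n-1)" using sl unfolding slt_def by simp
      then show False using sq_contra[OF sa[OF in_] smax std_pair_fast[OF sp] ne _ i(2)] by simp
    qed
    define B where "B = {x\<in>A. x \<lless> a (n-1)}"
    define C where "C = A - B"
    have "a i \<in> B" unfolding B_def using aA[OF in_] li by simp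
    then have B0: "B \<noteq> {}" by blast
    have "a (n-1) \<in> C" unfolding C_def B_def using mA ll_irrefl[OF smax] by simp
    then have C0: "C \<noteq> {}" by blast
    have BA: "B \<subseteq> A" unfolding B_def by auto
    have CA: "C \<subseteq> A" unfolding C_def by auto
    have "is_sum A B C"
      unfolding is_sum_def
    proof (intro conjI)
      show "A \<in> class_S" by fact
      show "B \<in> class_S" using class_S_sub[OF assms(1) BA] .
      show "C \<in> class_S" using class_S_sub[OF assms(1) CA] .
      show "A = B \<union> C" unfolding C_def using BA by auto
      show "\<forall>b\<in>B. \<forall>c\<in>C. b \<lless> c"
      proof (intro ballI)
        fix b c assume b: "b \<in> B" and c: "c \<in> C"
        have bl: "b \<lless> a (n-1)" using b unfolding B_def by simp
        have "c \<in> A" using c CA by auto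
        then obtain j where j: "j < n" "c = a j" using idx[OF assms(3)] by blast
        show "b \<lless> c"
        proof (cases "j = n - 1")
          case True then show ?thesis using bl j by simp
        next
          case False
          then have "j < n - 1" using j by simp
          then have "slt c (a (n-1))" using j assms(4)[of j "n-1"] n1 by simp
          moreover have "\<not> c \<lless> a (n-1)" using c \<open>c \<in> A\<close> unfolding C_def B_def by simp
          ultimately have "c \<sqsubset> a (n-1)" unfolding slt_def by simp
          then have sub: "ext_supp (fst c) \<subseteq> ext_supp (fst (a (n-1)))"
            unfolding sqsub_def using closure_subset by blast
          have "ext_supp (fst b) \<inter> ext_supp (fst (a (n-1))) = {}"
            "\<forall>x\<in>ext_supp (fst b). \<forall>y\<in>ext_supp (fst (a (n-1))). x < y"
            using bl unfolding ll_def by simp_all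
          then show ?thesis using sub unfolding ll_def by blast
        qed
      qed
    qed
    then show "decomposable A" unfolding decomposable_def using B0 C0 by blast
  qed
qed

end
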